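(* Fix a positive integer $k\geq 2$ and real numbers $\alpha,\beta\in(0,1)$ with $\alpha+\beta\geq (k+2)/k$. Let $n$ be a positive integer, sufficiently large in terms of $k,\alpha,\beta$, let $\ell\geq 2$ be an integer with $k^2\ell\leq n/3$, and let $m=\binom{n}{k}$. Then one can find $\lfloor m/\ell\rfloor$ $(k,\ell)$-parpartitions of $[n]$ such that (1) no $k$-element subset of $[n]$ appears in two of these parpartitions, and (2) no two distinct of these parpartitions $P_1,P_2$ are $(\alpha,\beta)$-close.
   Context: A $(k,\ell)$-parpartition (partial partition) of $[n]=\{1,\dots,n\}$ is a family of $\ell$ pairwise disjoint $k$-element subsets of $[n]$ (so $k\ell\leq n$; their union may be a proper subset of $[n]$). Two parpartitions $P_1,P_2$ are $(\alpha,\beta)$-close if there exist sets $A_1\neq B_1$ in $P_1$ and $A_2\neq B_2$ in $P_2$ with $|A_1\cap A_2|>\alpha k$ and $|B_1\cap B_2|>\beta k$. *)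

theory Defs
  imports Main Complex_Main
begin

definition parpartition :: "nat \<Rightarrow> nat \<Rightarrow> nat \<Rightarrow> nat set set \<Rightarrow> bool" where
  "parpartition n k l P \<longleftrightarrow>
     (\<forall>A\<in>P. A \<subseteq> {1..n} \<and> card A = k) \<and> card P = l \<and> finite P \<and>
     (\<forall>A\<in>P. \<forall>B\<in>P. A \<noteq> B \<longrightarrow> A \<inter> B = {})"

definition close :: "nat \<Rightarrow> real \<Rightarrow> real \<Rightarrow> nat set set \<Rightarrow> nat set set \<Rightarrow> bool" where
  "close k \<alpha> \<beta> P1 P2 \<longleftrightarrow>
     (\<exists>A1\<in>P1. \<exists>B1\<in>P1. \<exists>A2\<in>P2. \<exists>B2\<in>P2. A1 \<noteq> B1 \<and> A2 \<noteq> B2 \<and>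
        real (card (A1 \<inter> A2)) > \<alpha> * real k \<and> real (card (B1 \<inter> B2)) > \<beta> * real k)"

end

theory Submission
  imports Defs
begin


definition KS :: "nat \<Rightarrow> nat \<Rightarrow> nat set set" where
  "KS n k = {A. A \<subseteq> {1..n} \<and> card A = k}"

lemma KS_finite: "finite (KS n k)"
  unfolding KS_def by (rule finite_subset[of _ "Pow {1..n}"]) auto

lemma KS_card: "card (KS n k) = n choose k"
  unfolding KS_def using n_subsets[of "{1..n}" k] by simp

lemma KS_memfin: "X \<in> KS n k \<Longrightarrow> finite X"
  unfolding KS_def using finite_subset by blast

definition NB :: "nat \<Rightarrow> nat \<Rightarrow> nat set \<Rightarrow> nat \<Rightarrow> nat set set" where
  "NB n k A j = {X \<in> KS n k. j \<le> card (X \<inter> A)}"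

lemma NB_card:
  assumes "finite A" "card A = k" "j \<le> k"
  shows "card (NB n k A j) \<le> 2^k * n^(k-j)"
proof -
  let ?J = "{J. J \<subseteq> A \<and> card J = j}"
  have sub: "NB n k A j \<subseteq> (\<Union>J\<in>?J. (\<lambda>W. J \<union> W) ` KS n (k-j))"
  proof
    fix X assume X: "X \<in> NB n k A j"
    then have XK: "X \<subseteq> {1..n}" "card X = k" and c: "j \<le> card (X \<inter> A)"
      unfolding NB_def KS_def by auto
    have fX: "finite X" using XK finite_subset by blast
    obtain J where J: "J \<subseteq> X \<inter> A" "card J = j" "finite J"
      using obtain_subset_with_card_n[OF c] by metis
    have "X - J \<in> KS n (k-j)" unfolding KS_def
      using XK J fX by (auto simp: card_Diff_subset)
    moreover have "X = J \<union> (X - J)" using J by auto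
    ultimately show "X \<in> (\<Union>J\<in>?J. (\<lambda>W. J \<union> W) ` KS n (k-j))" using J by blast
  qed
  have "?J \<subseteq> Pow A" by auto
  then have fJ: "finite ?J" using assms(1) finite_subset by blast
  have "card (NB n k A j) \<le> card (\<Union>J\<in>?J. (\<lambda>W. J \<union> W) ` KS n (k-j))"
    by (rule card_mono[OF _ sub]) (use fJ KS_finite in auto)
  also have "\<dots> \<le> (\<Sum>J\<in>?J. card ((\<lambda>W. J \<union> W) ` KS n (k-j)))"
    by (rule card_UN_le[OF fJ])
  also have "\<dots> \<le> (\<Sum>J\<in>?J. card (KS n (k-j)))"
    by (rule sum_mono) (rule card_image_le[OF KS_finite])
  also have "\<dots> = (k choose j) * (n choose (k-j))"
    using n_subsets[OF assms(1), of j] assms KS_card by simp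
  also have "\<dots> \<le> 2^k * n^(k-j)"
  proof (rule mult_le_mono)
    show "k choose j \<le> 2^k" by (rule binomial_le_pow2)
    show "n choose (k-j) \<le> n^(k-j)"
      by (cases "k - j \<le> n") (auto simp: binomial_le_pow binomial_eq_0)
  qed
  finally show ?thesis .
qed

lemma meet_card:
  assumes "Y \<subseteq> {1..n}" "card Y = k" "k > 0"
  shows "card {X \<in> KS n k. X \<inter> Y \<noteq> {}} \<le> k * ((n-1) choose (k-1))"
proof -
  have fY: "finite Y" using assms(1) finite_subset by blast
  let ?W = "\<lambda>y. {W. W \<subseteq> {1..n} - {y} \<and> card W = k - 1}"
  have sub: "{X \<in> KS n k. X \<inter> Y \<noteq> {}} \<subseteq> (\<Union>y\<in>Y. insert y ` ?W y)"
  proof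
    fix X assume X: "X \<in> {X \<in> KS n k. X \<inter> Y \<noteq> {}}"
    then obtain y where y: "y \<in> X" "y \<in> Y" by auto
    have XK: "X \<subseteq> {1..n}" "card X = k" using X unfolding KS_def by auto
    have fX: "finite X" using XK finite_subset by blast
    have "X - {y} \<in> ?W y" using XK y fX by auto
    moreover have "X = insert y (X - {y})" using y by auto
    ultimately show "X \<in> (\<Union>y\<in>Y. insert y ` ?W y)" using y by blast
  qed
  have fW: "\<And>y. finite (?W y)" by (rule finite_subset[of _ "Pow {1..n}"]) auto
  have "card {X \<in> KS n k. X \<inter> Y \<noteq> {}} \<le> card (\<Union>y\<in>Y. insert y ` ?W y)"
    by (rule card_mono[OF _ sub]) (use fY fW in auto)
  also have "\<dots> \<le> (\<Sum>y\<in>Y. card (insert y ` ?W y))" by (rule card_UN_le[OF fY])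
  also have "\<dots> \<le> (\<Sum>y\<in>Y. card (?W y))" by (rule sum_mono) (rule card_image_le[OF fW])
  also have "\<dots> = (\<Sum>y\<in>Y. (n-1) choose (k-1))"
  proof (rule sum.cong[OF refl])
    fix y assume "y \<in> Y"
    then have "y \<in> {1..n}" using assms by auto
    then have "card ({1..n} - {y}) = n - 1" by simp
    then show "card (?W y) = (n-1) choose (k-1)"
      using n_subsets[of "{1..n} - {y}" "k-1"] by simp
  qed
  also have "\<dots> = k * ((n-1) choose (k-1))" using assms by simp
  finally show ?thesis .
qed

lemma UN_bound:
  assumes "finite I" "\<And>i. i \<in> I \<Longrightarrow> card (A i) \<le> K"
  shows "card (\<Union>i\<in>I. A i) \<le> card I * K"
proof -
  have "card (\<Union>i\<in>I. A i) \<le> (\<Sum>i\<in>I. card (A i))" by (rule card_UN_le[OF assms(1)])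
  also have "\<dots> \<le> card I * K" using sum_bounded_above[of I "\<lambda>i. card (A i)" K] assms by simp
  finally show ?thesis .
qed

definition GU :: "nat set set set \<Rightarrow> nat set \<Rightarrow> nat set set" where
  "GU F Z = \<Union>{P\<in>F. Z \<in> P}"

lemma GU_card:
  assumes "\<forall>P1\<in>F. \<forall>P2\<in>F. P1 \<noteq> P2 \<longrightarrow> P1 \<inter> P2 = {}" "\<forall>P\<in>F. card P \<le> l"
  shows "card (GU F Z) \<le> l"
proof (cases "\<exists>P\<in>F. Z \<in> P")
  case True
  then obtain P where P: "P \<in> F" "Z \<in> P" by auto
  have "{P\<in>F. Z \<in> P} = {P}"
  proof (rule set_eqI, rule iffI)
    fix Q assume "Q \<in> {P\<in>F. Z \<in> P}"
    then have "Q \<in> F" "Z \<in> Q" by auto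
    then show "Q \<in> {P}" using assms(1) P by blast
  qed (use P in auto)
  then show ?thesis using assms(2) P unfolding GU_def by simp
next
  case False
  then have e: "{P\<in>F. Z \<in> P} = {}" by auto
  show ?thesis unfolding GU_def e by simp
qed

lemma GU_mem: "P \<in> F \<Longrightarrow> Z \<in> P \<Longrightarrow> X \<in> P \<Longrightarrow> X \<in> GU F Z"
  unfolding GU_def by blast

lemma GU_sub: "\<forall>P\<in>F. P \<subseteq> KS n k \<Longrightarrow> GU F Z \<subseteq> KS n k"
  unfolding GU_def by blast

lemma GU_finite: "\<forall>P\<in>F. P \<subseteq> KS n k \<Longrightarrow> finite (GU F Z)"
  by (rule finite_subset[OF GU_sub KS_finite])

definition SC :: "nat \<Rightarrow> nat \<Rightarrow> nat set set set \<Rightarrow> nat set \<Rightarrow> nat set set" where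
  "SC n k F Y = {X \<in> KS n k. \<exists>P\<in>F. \<exists>A2\<in>P. \<exists>B2\<in>P. k + 3 \<le> card (X \<inter> A2) + card (Y \<inter> B2)}"

lemma NB_finite: "finite (NB n k A j)"
  unfolding NB_def using KS_finite by auto

lemma SC_card:
  assumes dis: "\<forall>P1\<in>F. \<forall>P2\<in>F. P1 \<noteq> P2 \<longrightarrow> P1 \<inter> P2 = {}"
    and cl: "\<forall>P\<in>F. card P \<le> l" and sk: "\<forall>P\<in>F. P \<subseteq> KS n k"
    and Y: "finite Y" "card Y = k" and k3: "3 \<le> k"
  shows "card (SC n k F Y) \<le> k * 4^k * l * n^(k-3)"
proof -
  let ?U = "\<Union>b\<in>{3..k}. \<Union>B2\<in>NB n k Y b. \<Union>A2\<in>GU F B2. NB n k A2 (k+3-b)"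
  have sub: "SC n k F Y \<subseteq> ?U"
  proof
    fix X assume "X \<in> SC n k F Y"
    then obtain P A2 B2 where X: "X \<in> KS n k" and P: "P \<in> F" "A2 \<in> P" "B2 \<in> P"
      and c: "k + 3 \<le> card (X \<inter> A2) + card (Y \<inter> B2)" unfolding SC_def by blast
    define b where "b = card (Y \<inter> B2)"
    have "b \<le> k" unfolding b_def using Y card_mono[of Y "Y \<inter> B2"] by auto
    moreover have "card (X \<inter> A2) \<le> k" using X KS_memfin[OF X] card_mono[of X "X \<inter> A2"]
      unfolding KS_def by auto
    ultimately have b3: "3 \<le> b" and a: "k + 3 - b \<le> card (X \<inter> A2)" using c b_def by auto
    have B2: "B2 \<in> NB n k Y b" proof -
      have "card (B2 \<inter> Y) = b" unfolding b_def by (simp add: Int_commute)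
      then show ?thesis unfolding NB_def using sk P by auto
    qed
    have A2: "A2 \<in> GU F B2" using GU_mem P by blast
    have "X \<in> NB n k A2 (k+3-b)" unfolding NB_def using X a by auto
    then have "X \<in> (\<Union>A2\<in>GU F B2. NB n k A2 (k+3-b))" using A2 by (rule UN_I[rotated])
    then have "X \<in> (\<Union>B2\<in>NB n k Y b. \<Union>A2\<in>GU F B2. NB n k A2 (k+3-b))" using B2 by (rule UN_I[rotated])
    moreover have "b \<in> {3..k}" using b3 \<open>b \<le> k\<close> by simp
    ultimately show "X \<in> ?U" by (rule UN_I[rotated])
  qed
  have "card (SC n k F Y) \<le> card ?U"
    by (rule card_mono[OF _ sub]) (simp add: NB_finite GU_finite[OF sk])
  also have "\<dots> \<le> card {3..k} * (4^k * l * n^(k-3))"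
  proof (rule UN_bound)
    fix b assume b: "b \<in> {3..k}"
    have "card (\<Union>B2\<in>NB n k Y b. \<Union>A2\<in>GU F B2. NB n k A2 (k+3-b))
          \<le> card (NB n k Y b) * (l * (2^k * n^(b-3)))"
    proof (rule UN_bound[OF NB_finite])
      fix B2 assume "B2 \<in> NB n k Y b"
      have "card (\<Union>A2\<in>GU F B2. NB n k A2 (k+3-b)) \<le> card (GU F B2) * (2^k * n^(b-3))"
      proof (rule UN_bound[OF GU_finite[OF sk]])
        fix A2 assume "A2 \<in> GU F B2"
        then have "A2 \<in> KS n k" using GU_sub[OF sk] by blast
        then have fA: "finite A2" "card A2 = k" by (rule KS_memfin) (use \<open>A2 \<in> KS n k\<close> in \<open>simp add: KS_def\<close>)
        have "k+3-b \<le> k" using b by auto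
        then have "card (NB n k A2 (k+3-b)) \<le> 2^k * n^(k-(k+3-b))"
          by (rule NB_card[OF fA])
        also have "k-(k+3-b) = b - 3" using b by auto
        finally show "card (NB n k A2 (k+3-b)) \<le> 2^k * n^(b-3)" .
      qed
      also have "\<dots> \<le> l * (2^k * n^(b-3))" using GU_card[OF dis cl] by simp
      finally show "card (\<Union>A2\<in>GU F B2. NB n k A2 (k+3-b)) \<le> l * (2^k * n^(b-3))" .
    qed
    also have "\<dots> \<le> (2^k * n^(k-b)) * (l * (2^k * n^(b-3)))"
    proof (rule mult_le_mono1)
      show "card (NB n k Y b) \<le> 2^k * n^(k-b)" by (rule NB_card[OF Y]) (use b in simp)
    qed
    also have "\<dots> = (2^k * 2^k) * l * (n^(k-b) * n^(b-3))"
      by (simp only: ac_simps)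
    also have "\<dots> = 4^k * l * n^(k-3)"
    proof -
      have e1: "(2::nat)^k * 2^k = 4^k" by (simp add: power_mult_distrib[symmetric])
      have e2: "n^(k-b) * n^(b-3) = n^(k-3)" using b by (simp add: power_add[symmetric])
      show ?thesis by (simp only: e1 e2)
    qed
    finally show "card (\<Union>B2\<in>NB n k Y b. \<Union>A2\<in>GU F B2. NB n k A2 (k+3-b)) \<le> 4^k * l * n^(k-3)" .
  qed simp
  also have "\<dots> \<le> k * (4^k * l * n^(k-3))" by (intro mult_le_mono1) simp
  finally show ?thesis by (simp add: mult.assoc)
qed



definition conf :: "nat \<Rightarrow> nat set \<Rightarrow> nat set \<Rightarrow> nat set \<Rightarrow> nat set \<Rightarrow> bool" where
  "conf k A1 B1 A2 B2 \<longleftrightarrow> k + 3 \<le> card (A1 \<inter> A2) + card (B1 \<inter> B2)"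

definition nc :: "nat \<Rightarrow> nat set set \<Rightarrow> nat set set \<Rightarrow> bool" where
  "nc k P1 P2 \<longleftrightarrow> (\<forall>A1\<in>P1. \<forall>B1\<in>P1. \<forall>A2\<in>P2. \<forall>B2\<in>P2. A1 \<noteq> B1 \<longrightarrow> A2 \<noteq> B2 \<longrightarrow> \<not> conf k A1 B1 A2 B2)"

lemma conf_sym: "conf k A1 B1 A2 B2 = conf k A2 B2 A1 B1"
  unfolding conf_def by (simp add: Int_commute)

lemma conf_swap: "conf k A1 B1 A2 B2 = conf k B1 A1 B2 A2"
  unfolding conf_def by (simp add: add.commute)

lemma nc_sym: "nc k P1 P2 \<Longrightarrow> nc k P2 P1"
  unfolding nc_def using conf_sym by metis

lemma nc_insert:
  assumes "nc k H P" "\<forall>Y\<in>H. \<forall>A2\<in>P. \<forall>B2\<in>P. \<not> conf k X Y A2 B2"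
  shows "nc k (insert X H) P"
  unfolding nc_def
proof (intro ballI impI)
  fix A1 B1 A2 B2 assume m: "A1 \<in> insert X H" "B1 \<in> insert X H" "A2 \<in> P" "B2 \<in> P"
    and ne: "A1 \<noteq> B1" "A2 \<noteq> B2"
  show "\<not> conf k A1 B1 A2 B2"
  proof (cases "A1 = X")
    case True
    then have "B1 \<in> H" using m ne by auto
    then show ?thesis using assms(2) m True by blast
  next
    case False
    then have A1: "A1 \<in> H" using m by auto
    show ?thesis
    proof (cases "B1 = X")
      case True
      then have "\<not> conf k X A1 B2 A2" using assms(2) A1 m by blast
      then show ?thesis using True conf_swap by metis
    next
      case False
      then have "B1 \<in> H" using m by auto
      then show ?thesis using assms(1) A1 m ne unfolding nc_def by blast
    qed
  qed
qed

lemma nc_insert2: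
  assumes "nc k Q P" "r \<notin> Q" "\<forall>Z\<in>Q. \<forall>A2\<in>P. \<forall>B2\<in>P. \<not> conf k Z r A2 B2"
  shows "nc k (insert r (Q - {X})) P"
  unfolding nc_def
proof (intro ballI impI)
  fix A1 B1 A2 B2 assume m: "A1 \<in> insert r (Q - {X})" "B1 \<in> insert r (Q - {X})" "A2 \<in> P" "B2 \<in> P"
    and ne: "A1 \<noteq> B1" "A2 \<noteq> B2"
  show "\<not> conf k A1 B1 A2 B2"
  proof (cases "A1 = r")
    case True
    then have B1: "B1 \<in> Q" using m ne by auto
    have "\<not> conf k B1 r B2 A2" using assms(3) B1 m by blast
    then show ?thesis using True conf_swap by metis
  next
    case False
    then have A1: "A1 \<in> Q" using m by auto
    show ?thesis
    proof (cases "B1 = r")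
      case True
      then show ?thesis using assms(3) A1 m by blast
    next
      case False
      then have "B1 \<in> Q" using m by auto
      then show ?thesis using assms(1) A1 m ne unfolding nc_def by blast
    qed
  qed
qed

lemma card_int_le: "finite B \<Longrightarrow> card B = k \<Longrightarrow> card (A \<inter> B) \<le> k"
  by (metis card_mono inf_le2)

lemma nc_HQ:
  assumes nHQ: "nc k (insert X H) Q" and XQ: "X \<in> Q"
    and disQ: "\<forall>A\<in>Q. \<forall>B\<in>Q. A \<noteq> B \<longrightarrow> A \<inter> B = {}"
    and d5: "\<forall>Z\<in>Q. \<forall>Y\<in>H. card (Z \<inter> Y) < 3"
    and r: "finite r" "card r = k"
  shows "nc k (insert X H) (insert r (Q - {X}))"
  unfolding nc_def
proof (intro ballI impI)
  fix A1 B1 A2 B2 assume m: "A1 \<in> insert X H" "B1 \<in> insert X H"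
    "A2 \<in> insert r (Q - {X})" "B2 \<in> insert r (Q - {X})"
    and ne: "A1 \<noteq> B1" "A2 \<noteq> B2"
  have small: "\<And>Z C. Z \<in> Q - {X} \<Longrightarrow> C \<in> insert X H \<Longrightarrow> card (C \<inter> Z) < 3"
  proof -
    fix Z C assume Z: "Z \<in> Q - {X}" and C: "C \<in> insert X H"
    show "card (C \<inter> Z) < 3"
    proof (cases "C = X")
      case True
      then have "C \<inter> Z = {}" using disQ Z XQ by auto
      then show ?thesis by simp
    next
      case False
      then have "C \<in> H" using C by auto
      then have "card (Z \<inter> C) < 3" using d5 Z by blast
      then show ?thesis by (simp add: Int_commute)
    qed
  qed
  show "\<not> conf k A1 B1 A2 B2"
  proof (cases "A2 = r")
    case True
    then have B2: "B2 \<in> Q - {X}" using m ne by auto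
    have "card (A1 \<inter> A2) \<le> k" using True r card_int_le by blast
    moreover have "card (B1 \<inter> B2) < 3" using small B2 m by blast
    ultimately show ?thesis unfolding conf_def by linarith
  next
    case False
    then have A2: "A2 \<in> Q - {X}" using m by auto
    show ?thesis
    proof (cases "B2 = r")
      case True
      have "card (B1 \<inter> B2) \<le> k" using True r card_int_le by blast
      moreover have "card (A1 \<inter> A2) < 3" using small A2 m by blast
      ultimately show ?thesis unfolding conf_def by linarith
    next
      case False
      then have "B2 \<in> Q" using m by auto
      then show ?thesis using nHQ A2 m ne unfolding nc_def by blast
    qed
  qed
qed



definition goodx :: "nat \<Rightarrow> nat \<Rightarrow> nat \<Rightarrow> nat set set set \<Rightarrow> nat set set \<Rightarrow> bool" where
  "goodx n k l F H \<longleftrightarrow> finite F \<and> (\<forall>P\<in>F. parpartition n k l P) \<and>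
     (\<forall>P1\<in>F. \<forall>P2\<in>F. P1 \<noteq> P2 \<longrightarrow> P1 \<inter> P2 = {}) \<and>
     (\<forall>P1\<in>F. \<forall>P2\<in>F. P1 \<noteq> P2 \<longrightarrow> nc k P1 P2) \<and>
     H \<subseteq> KS n k \<and> finite H \<and> card H \<le> l \<and> (\<forall>A\<in>H. \<forall>B\<in>H. A \<noteq> B \<longrightarrow> A \<inter> B = {}) \<and>
     (\<forall>P\<in>F. P \<inter> H = {}) \<and> (\<forall>P\<in>F. nc k H P)"

lemma pp_KS: "parpartition n k l P \<Longrightarrow> P \<subseteq> KS n k"
  unfolding parpartition_def KS_def by auto

lemma close_step:
  assumes g: "goodx n k l F H" and c: "card H = l" and l: "1 \<le> l"
  shows "goodx n k l (insert H F) {} \<and> card (insert H F) = card F + 1"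
proof -
  have fF: "finite F" and pp: "\<forall>P\<in>F. parpartition n k l P"
    and dis: "\<forall>P1\<in>F. \<forall>P2\<in>F. P1 \<noteq> P2 \<longrightarrow> P1 \<inter> P2 = {}"
    and ncF: "\<forall>P1\<in>F. \<forall>P2\<in>F. P1 \<noteq> P2 \<longrightarrow> nc k P1 P2"
    and HK: "H \<subseteq> KS n k" and fH: "finite H" and disH: "\<forall>A\<in>H. \<forall>B\<in>H. A \<noteq> B \<longrightarrow> A \<inter> B = {}"
    and PH: "\<forall>P\<in>F. P \<inter> H = {}" and ncH: "\<forall>P\<in>F. nc k H P"
    using g unfolding goodx_def by auto
  have Hne: "H \<noteq> {}" using c l by auto
  have HF: "H \<notin> F" using PH Hne by auto
  have ppH: "parpartition n k l H"
    unfolding parpartition_def using HK fH c disH unfolding KS_def by auto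
  have g2: "goodx n k l (insert H F) {}"
    unfolding goodx_def
  proof (intro conjI)
    show "finite (insert H F)" using fF by simp
    show "\<forall>P\<in>insert H F. parpartition n k l P" using pp ppH by auto
    show "\<forall>P1\<in>insert H F. \<forall>P2\<in>insert H F. P1 \<noteq> P2 \<longrightarrow> P1 \<inter> P2 = {}"
      using dis PH by blast
    show "\<forall>P1\<in>insert H F. \<forall>P2\<in>insert H F. P1 \<noteq> P2 \<longrightarrow> nc k P1 P2"
      using ncF ncH nc_sym by blast
    show "\<forall>P\<in>insert H F. nc k {} P" unfolding nc_def by simp
  qed auto
  moreover have "card (insert H F) = card F + 1" using fF HF by simp
  ultimately show ?thesis by simp
qed



lemma arith_aux:
  fixes b h x1 x2 x3 x4 x5 y1 y3 y5 p q L mm :: nat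
  assumes "b \<le> h + 1 + x1 + x2 + x3 + x4 + x5" "x1 \<le> y1" "x2 \<le> p" "x3 \<le> y3"
      "x4 \<le> q" "x5 \<le> y5" "y1 \<le> p" "y3 \<le> q" "y5 \<le> q"
      "3 * (L + 3 * q) < mm" "3 * p \<le> mm" "h < L"
  shows "b < mm"
proof -
  have "b \<le> L + 2 * p + 3 * q" using assms(1-9,12) by linarith
  then have "3 * b \<le> 3 * L + 6 * p + 9 * q" by linarith
  moreover have "3 * L + 9 * q < mm" using assms(10) by simp
  moreover have "6 * p \<le> 2 * mm" using assms(11) by simp
  ultimately have "3 * b < 3 * mm" by linarith
  then show ?thesis by simp
qed

lemma exX:
  assumes g: "goodx n k l F H" and cH: "card H < l" and rK: "r \<in> KS n k" and k3: "3 \<le> k"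
    and hM: "3 * (l * (k * ((n-1) choose (k-1)))) \<le> n choose k"
    and hE: "3 * (l + 3 * (l * (k * 4^k * l * n^(k-3)))) < n choose k"
  shows "\<exists>X\<in>KS n k. X \<notin> H \<and> X \<noteq> r \<and> (\<forall>Y\<in>H. X \<inter> Y = {}) \<and>
     (\<forall>Y\<in>H. \<forall>P\<in>F. \<forall>A2\<in>P. \<forall>B2\<in>P. \<not> conf k X Y A2 B2) \<and>
     (\<forall>Q\<in>F. X \<in> Q \<longrightarrow> (\<forall>Z\<in>Q. Z \<inter> r = {}) \<and>
        (\<forall>Z\<in>Q. \<forall>P\<in>F. \<forall>A2\<in>P. \<forall>B2\<in>P. \<not> conf k Z r A2 B2) \<and>
        (\<forall>Z\<in>Q. \<forall>Y\<in>H. card (Z \<inter> Y) < 3))"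
proof -
  have fF: "finite F" and pp: "\<forall>P\<in>F. parpartition n k l P"
    and dis: "\<forall>P1\<in>F. \<forall>P2\<in>F. P1 \<noteq> P2 \<longrightarrow> P1 \<inter> P2 = {}"
    and HK: "H \<subseteq> KS n k" and fH: "finite H"
    using g unfolding goodx_def by auto
  have sk: "\<forall>P\<in>F. P \<subseteq> KS n k" using pp pp_KS by blast
  have cl: "\<forall>P\<in>F. card P \<le> l" using pp unfolding parpartition_def by auto
  define M where "M = k * ((n-1) choose (k-1))"
  define E where "E = k * 4^k * l * n^(k-3)"
  define m where "m = n choose k"
  have YK: "\<And>Y. Y \<in> KS n k \<Longrightarrow> Y \<subseteq> {1..n} \<and> card Y = k \<and> finite Y"
    using KS_memfin unfolding KS_def by blast
  define B1 where "B1 = (\<Union>Y\<in>H. {X \<in> KS n k. X \<inter> Y \<noteq> {}})"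
  define B2 where "B2 = (\<Union>Z\<in>{Z \<in> KS n k. Z \<inter> r \<noteq> {}}. GU F Z)"
  define B3 where "B3 = (\<Union>Y\<in>H. SC n k F Y)"
  define B4 where "B4 = (\<Union>Z\<in>SC n k F r. GU F Z)"
  define B5 where "B5 = (\<Union>Y\<in>H. \<Union>Z\<in>NB n k Y 3. GU F Z)"
  define Bad where "Bad = H \<union> {r} \<union> B1 \<union> B2 \<union> B3 \<union> B4 \<union> B5"
  have c1: "card B1 \<le> card H * M" unfolding B1_def M_def
  proof (rule UN_bound[OF fH])
    fix Y assume "Y \<in> H"
    then have "Y \<subseteq> {1..n}" "card Y = k" using YK HK by auto
    then show "card {X \<in> KS n k. X \<inter> Y \<noteq> {}} \<le> k * ((n-1) choose (k-1))"
      using meet_card k3 by simp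
  qed
  have c2: "card B2 \<le> M * l"
  proof -
    have "card B2 \<le> card {Z \<in> KS n k. Z \<inter> r \<noteq> {}} * l" unfolding B2_def
      by (rule UN_bound) (use KS_finite GU_card[OF dis cl] in auto)
    also have "card {Z \<in> KS n k. Z \<inter> r \<noteq> {}} \<le> M" unfolding M_def
      using meet_card[of r n k] YK[OF rK] k3 by simp
    finally show ?thesis by simp
  qed
  have c3: "card B3 \<le> card H * E" unfolding B3_def E_def
  proof (rule UN_bound[OF fH])
    fix Y assume "Y \<in> H"
    then have "finite Y" "card Y = k" using YK HK by auto
    then show "card (SC n k F Y) \<le> k * 4^k * l * n^(k-3)" using SC_card[OF dis cl sk _ _ k3] by simp
  qed
  have c4: "card B4 \<le> E * l"
  proof -
    have "card B4 \<le> card (SC n k F r) * l" unfolding B4_def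
    proof (rule UN_bound)
      show "finite (SC n k F r)" unfolding SC_def using KS_finite by simp
      show "\<And>Z. Z \<in> SC n k F r \<Longrightarrow> card (GU F Z) \<le> l" using GU_card[OF dis cl] by simp
    qed
    also have "card (SC n k F r) \<le> E" unfolding E_def
      using SC_card[OF dis cl sk _ _ k3] YK[OF rK] by simp
    finally show ?thesis by simp
  qed
  have c5: "card B5 \<le> card H * (2^k * n^(k-3) * l)" unfolding B5_def
  proof (rule UN_bound[OF fH])
    fix Y assume "Y \<in> H"
    then have Y: "finite Y" "card Y = k" using YK HK by auto
    have "card (\<Union>Z\<in>NB n k Y 3. GU F Z) \<le> card (NB n k Y 3) * l"
      by (rule UN_bound[OF NB_finite]) (use GU_card[OF dis cl] in simp)
    also have "card (NB n k Y 3) \<le> 2^k * n^(k-3)" using NB_card[OF Y] k3 by simp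
    finally show "card (\<Union>Z\<in>NB n k Y 3. GU F Z) \<le> 2^k * n^(k-3) * l" by simp
  qed
  have cBad: "card Bad \<le> card H + 1 + card B1 + card B2 + card B3 + card B4 + card B5"
    unfolding Bad_def by (intro order.trans[OF card_Un_le] add_mono order.refl; simp add: card_Un_le)
  have t1: "card H * M \<le> l * M" by (rule mult_le_mono1) (use cH in simp)
  have t3: "card H * E \<le> l * E" by (rule mult_le_mono1) (use cH in simp)
  have "(2::nat)^k \<le> 4^k" by (rule power_mono) auto
  also have "(4::nat)^k \<le> k * 4^k" using k3 by simp
  finally have "2^k * n^(k-3) * l \<le> (k * 4^k) * n^(k-3) * l"
    by (intro mult_le_mono1)
  also have "\<dots> = E" unfolding E_def by (simp only: ac_simps)
  finally have "2^k * n^(k-3) * l \<le> E" .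
  moreover have "card H \<le> l" using cH by simp
  ultimately have t5: "card H * (2^k * n^(k-3) * l) \<le> l * E"
    by (intro mult_le_mono)
  have hE': "3 * (l + 3 * (l * E)) < m" using hE unfolding E_def m_def .
  have hM': "3 * (l * M) \<le> m" using hM unfolding M_def m_def .
  have c2': "card B2 \<le> l * M" using c2 by (simp add: mult.commute)
  have c4': "card B4 \<le> l * E" using c4 by (simp add: mult.commute)
  have "card Bad < m"
    by (rule arith_aux[OF cBad c1 c2' c3 c4' c5 t1 t3 t5 hE' hM' cH])
  have sub: "Bad \<subseteq> KS n k"
  proof -
    have GS: "\<And>Z. GU F Z \<subseteq> KS n k" using GU_sub[OF sk] by blast
    have "B2 \<subseteq> KS n k" "B4 \<subseteq> KS n k" "B5 \<subseteq> KS n k"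
      unfolding B2_def B4_def B5_def using GS by blast+
    moreover have "B1 \<subseteq> KS n k" "B3 \<subseteq> KS n k" unfolding B1_def B3_def SC_def by blast+
    ultimately show ?thesis unfolding Bad_def using HK rK by (simp only: Un_subset_iff insert_subset) simp
  qed
  have "\<exists>X\<in>KS n k. X \<notin> Bad"
  proof (rule ccontr)
    assume "\<not> ?thesis"
    then have "KS n k \<subseteq> Bad" by blast
    then have "card (KS n k) \<le> card Bad"
      by (rule card_mono[rotated]) (rule finite_subset[OF sub KS_finite])
    then show False using \<open>card Bad < m\<close> KS_card m_def by simp
  qed
  then obtain X where XK: "X \<in> KS n k" and XB: "X \<notin> Bad" by blast
  have nB: "X \<notin> H" "X \<noteq> r" "X \<notin> B1" "X \<notin> B2" "X \<notin> B3" "X \<notin> B4" "X \<notin> B5"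
    using XB unfolding Bad_def by simp_all
  have d1: "\<forall>Y\<in>H. X \<inter> Y = {}" using nB(3) XK unfolding B1_def by blast
  have d3: "\<forall>Y\<in>H. \<forall>P\<in>F. \<forall>A2\<in>P. \<forall>B2\<in>P. \<not> conf k X Y A2 B2"
  proof (intro ballI notI)
    fix Y P A2 B2 assume "Y \<in> H" "P \<in> F" "A2 \<in> P" "B2 \<in> P" "conf k X Y A2 B2"
    then have "X \<in> SC n k F Y" using XK unfolding SC_def conf_def by blast
    then show False using nB(5) \<open>Y \<in> H\<close> unfolding B3_def by blast
  qed
  have dQ: "\<forall>Q\<in>F. X \<in> Q \<longrightarrow> (\<forall>Z\<in>Q. Z \<inter> r = {}) \<and>
        (\<forall>Z\<in>Q. \<forall>P\<in>F. \<forall>A2\<in>P. \<forall>B2\<in>P. \<not> conf k Z r A2 B2) \<and>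
        (\<forall>Z\<in>Q. \<forall>Y\<in>H. card (Z \<inter> Y) < 3)"
  proof (intro ballI impI)
    fix Q assume Q: "Q \<in> F" "X \<in> Q"
    have XG: "\<And>Z. Z \<in> Q \<Longrightarrow> X \<in> GU F Z" using GU_mem[OF Q(1) _ Q(2)] by blast
    have ZK: "\<And>Z. Z \<in> Q \<Longrightarrow> Z \<in> KS n k" using sk Q by blast
    have e1: "\<forall>Z\<in>Q. Z \<inter> r = {}"
    proof (intro ballI, rule ccontr)
      fix Z assume Z: "Z \<in> Q" and "Z \<inter> r \<noteq> {}"
      then have "X \<in> B2" unfolding B2_def using ZK[OF Z] XG[OF Z] by blast
      then show False using nB by blast
    qed
    have e2: "\<forall>Z\<in>Q. \<forall>P\<in>F. \<forall>A2\<in>P. \<forall>B2\<in>P. \<not> conf k Z r A2 B2"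
    proof (intro ballI notI)
      fix Z P A2 B2 assume Z: "Z \<in> Q" and "P \<in> F" "A2 \<in> P" "B2 \<in> P" "conf k Z r A2 B2"
      then have "Z \<in> SC n k F r" using ZK[OF Z] unfolding SC_def conf_def by blast
      then have "X \<in> B4" unfolding B4_def using XG[OF Z] by blast
      then show False using nB by blast
    qed
    have e3: "\<forall>Z\<in>Q. \<forall>Y\<in>H. card (Z \<inter> Y) < 3"
    proof (intro ballI, rule ccontr)
      fix Z Y assume Z: "Z \<in> Q" and Y: "Y \<in> H" and "\<not> card (Z \<inter> Y) < 3"
      then have "Z \<in> NB n k Y 3" using ZK[OF Z] unfolding NB_def by simp
      then have "X \<in> B5" unfolding B5_def using XG[OF Z] Y by blast
      then show False using nB by blast
    qed
    show "(\<forall>Z\<in>Q. Z \<inter> r = {}) \<and>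
        (\<forall>Z\<in>Q. \<forall>P\<in>F. \<forall>A2\<in>P. \<forall>B2\<in>P. \<not> conf k Z r A2 B2) \<and>
        (\<forall>Z\<in>Q. \<forall>Y\<in>H. card (Z \<inter> Y) < 3)" using e1 e2 e3 by blast
  qed
  show ?thesis using nB(1,2) using XK d1 d3 dQ by blast
qed



lemma ext:
  assumes g: "goodx n k l F H" and cH: "card H < l" and rK: "r \<in> KS n k"
    and rF: "\<forall>P\<in>F. r \<notin> P" and rH: "r \<notin> H" and k3: "3 \<le> k"
    and hM: "3 * (l * (k * ((n-1) choose (k-1)))) \<le> n choose k"
    and hE: "3 * (l + 3 * (l * (k * 4^k * l * n^(k-3)))) < n choose k"
  shows "\<exists>F' H'. goodx n k l F' H' \<and> card F' = card F \<and> card H' = card H + 1"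
proof -
  have fF: "finite F" and pp: "\<forall>P\<in>F. parpartition n k l P"
    and dis: "\<forall>P1\<in>F. \<forall>P2\<in>F. P1 \<noteq> P2 \<longrightarrow> P1 \<inter> P2 = {}"
    and ncF: "\<forall>P1\<in>F. \<forall>P2\<in>F. P1 \<noteq> P2 \<longrightarrow> nc k P1 P2"
    and HK: "H \<subseteq> KS n k" and fH: "finite H" and disH: "\<forall>A\<in>H. \<forall>B\<in>H. A \<noteq> B \<longrightarrow> A \<inter> B = {}"
    and PH: "\<forall>P\<in>F. P \<inter> H = {}" and ncH: "\<forall>P\<in>F. nc k H P"
    using g unfolding goodx_def by auto
  from exX[OF g cH rK k3 hM hE] obtain X where XK: "X \<in> KS n k" and XP: "X \<notin> H \<and> X \<noteq> r \<and> (\<forall>Y\<in>H. X \<inter> Y = {}) \<and>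
     (\<forall>Y\<in>H. \<forall>P\<in>F. \<forall>A2\<in>P. \<forall>B2\<in>P. \<not> conf k X Y A2 B2) \<and>
     (\<forall>Q\<in>F. X \<in> Q \<longrightarrow> (\<forall>Z\<in>Q. Z \<inter> r = {}) \<and>
        (\<forall>Z\<in>Q. \<forall>P\<in>F. \<forall>A2\<in>P. \<forall>B2\<in>P. \<not> conf k Z r A2 B2) \<and>
        (\<forall>Z\<in>Q. \<forall>Y\<in>H. card (Z \<inter> Y) < 3))" ..
  note XP2 = XP[THEN conjunct2, THEN conjunct2]
  have XH: "X \<notin> H" using XP by (rule conjunct1)
  have Xr: "X \<noteq> r" using XP[THEN conjunct2] by (rule conjunct1)
  have d1: "\<forall>Y\<in>H. X \<inter> Y = {}" using XP2 by (rule conjunct1)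
  have d3: "\<forall>Y\<in>H. \<forall>P\<in>F. \<forall>A2\<in>P. \<forall>B2\<in>P. \<not> conf k X Y A2 B2" using XP2[THEN conjunct2] by (rule conjunct1)
  have dQ: "\<forall>Q\<in>F. X \<in> Q \<longrightarrow> (\<forall>Z\<in>Q. Z \<inter> r = {}) \<and>
        (\<forall>Z\<in>Q. \<forall>P\<in>F. \<forall>A2\<in>P. \<forall>B2\<in>P. \<not> conf k Z r A2 B2) \<and>
        (\<forall>Z\<in>Q. \<forall>Y\<in>H. card (Z \<inter> Y) < 3)" using XP2[THEN conjunct2] by (rule conjunct2)
  define H' where "H' = insert X H"
  have H'K: "H' \<subseteq> KS n k" unfolding H'_def using HK XK by simp
  have fH': "finite H'" unfolding H'_def using fH by simp
  have cH': "card H' = card H + 1" unfolding H'_def using fH XH by simp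
  have disH': "\<forall>A\<in>H'. \<forall>B\<in>H'. A \<noteq> B \<longrightarrow> A \<inter> B = {}"
  proof (intro ballI impI)
    fix A B assume "A \<in> H'" "B \<in> H'" "A \<noteq> B"
    then consider "A = X" "B \<in> H" | "B = X" "A \<in> H" | "A \<in> H" "B \<in> H" unfolding H'_def by auto
    then show "A \<inter> B = {}"
    proof cases
      case 1 then show ?thesis using d1 by blast
    next
      case 2 then show ?thesis using d1 by blast
    next
      case 3 then show ?thesis using disH \<open>A \<noteq> B\<close> by blast
    qed
  qed
  have ncH'P: "\<And>P. P \<in> F \<Longrightarrow> nc k H' P" unfolding H'_def
  proof (rule nc_insert)
    fix P assume P: "P \<in> F"
    show "nc k H P" using ncH P by blast
    show "\<forall>Y\<in>H. \<forall>A2\<in>P. \<forall>B2\<in>P. \<not> conf k X Y A2 B2" using d3 P by blast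
  qed
  show ?thesis
  proof (cases "\<exists>Q\<in>F. X \<in> Q")
    case False
    have "goodx n k l F H'"
      unfolding goodx_def
    proof (intro conjI)
      show "card H' \<le> l" using cH' cH by simp
      show "\<forall>P\<in>F. P \<inter> H' = {}" using PH False unfolding H'_def by blast
      show "\<forall>P\<in>F. nc k H' P" using ncH'P by blast
    qed (use fF pp dis ncF H'K fH' disH' in auto)
    then show ?thesis using cH' by blast
  next
    case True
    then obtain Q where Q: "Q \<in> F" "X \<in> Q" by blast
    have e1: "\<forall>Z\<in>Q. Z \<inter> r = {}" and e2: "\<forall>Z\<in>Q. \<forall>P\<in>F. \<forall>A2\<in>P. \<forall>B2\<in>P. \<not> conf k Z r A2 B2"
      and e3: "\<forall>Z\<in>Q. \<forall>Y\<in>H. card (Z \<inter> Y) < 3" using dQ Q by simp_all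
    have ppQ: "parpartition n k l Q" using pp Q by blast
    then have QK: "Q \<subseteq> KS n k" and cQ: "card Q = l" and fQ: "finite Q"
      and disQ: "\<forall>A\<in>Q. \<forall>B\<in>Q. A \<noteq> B \<longrightarrow> A \<inter> B = {}"
      using pp_KS[OF ppQ] ppQ unfolding parpartition_def by auto
    have rQ: "r \<notin> Q" using rF Q by blast
    define Q' where "Q' = insert r (Q - {X})"
    define F' where "F' = insert Q' (F - {Q})"
    have rQ': "r \<in> Q'" unfolding Q'_def by simp
    have Q'F: "Q' \<notin> F - {Q}" using rF rQ' by blast
    have "card F > 0" using fF Q(1) card_gt_0_iff by blast
    then have cF': "card F' = card F" unfolding F'_def using Q'F fF Q(1)
      by (simp add: card_Suc_Diff1)
    have rKS: "r \<subseteq> {1..n}" "card r = k" "finite r" using KS_memfin[OF rK] rK unfolding KS_def by auto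
    have ppQ': "parpartition n k l Q'"
      unfolding parpartition_def
    proof (intro conjI)
      show "\<forall>A\<in>Q'. A \<subseteq> {1..n} \<and> card A = k" using QK rKS unfolding Q'_def KS_def by auto
      have "l > 0" using cQ Q(2) fQ card_gt_0_iff by blast
      then show "card Q' = l" unfolding Q'_def using fQ rQ Q(2) cQ by (simp add: card_Diff_singleton)
      show "finite Q'" unfolding Q'_def using fQ by simp
      show "\<forall>A\<in>Q'. \<forall>B\<in>Q'. A \<noteq> B \<longrightarrow> A \<inter> B = {}"
      proof (intro ballI impI)
        fix A B assume "A \<in> Q'" "B \<in> Q'" "A \<noteq> B"
        then consider "A = r" "B \<in> Q" | "B = r" "A \<in> Q" | "A \<in> Q" "B \<in> Q" unfolding Q'_def by auto
        then show "A \<inter> B = {}"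
        proof cases
          case 1 then show ?thesis using e1 by blast
        next
          case 2 then show ?thesis using e1 by blast
        next
          case 3 then show ?thesis using disQ \<open>A \<noteq> B\<close> by blast
        qed
      qed
    qed
    have Q'P: "\<And>P. P \<in> F - {Q} \<Longrightarrow> Q' \<inter> P = {}"
    proof -
      fix P assume P: "P \<in> F - {Q}"
      then have "Q \<inter> P = {}" using dis Q by blast
      then show "Q' \<inter> P = {}" unfolding Q'_def using rF P by blast
    qed
    have ncQ'P: "\<And>P. P \<in> F - {Q} \<Longrightarrow> nc k Q' P" unfolding Q'_def
    proof (rule nc_insert2)
      fix P assume P: "P \<in> F - {Q}"
      show "nc k Q P" using ncF P Q by blast
      show "r \<notin> Q" by (rule rQ)
      show "\<forall>Z\<in>Q. \<forall>A2\<in>P. \<forall>B2\<in>P. \<not> conf k Z r A2 B2" using e2 P by blast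
    qed
    have ncH'Q': "nc k H' Q'" unfolding Q'_def H'_def
    proof (rule nc_HQ)
      show "nc k (insert X H) Q" using ncH'P[OF Q(1)] unfolding H'_def .
    qed (use Q disQ e3 rKS in auto)
  have comb: "\<forall>P1\<in>F'. \<forall>P2\<in>F'. P1 \<noteq> P2 \<longrightarrow> P1 \<inter> P2 = {} \<and> nc k P1 P2"
    proof (intro ballI impI)
      fix P1 P2 assume P1: "P1 \<in> F'" and P2: "P2 \<in> F'" and ne: "P1 \<noteq> P2"
      consider "P1 = Q'" "P2 \<in> F - {Q}" | "P2 = Q'" "P1 \<in> F - {Q}" | "P1 \<in> F - {Q}" "P2 \<in> F - {Q}"
        using P1 P2 ne unfolding F'_def by blast
      then show "P1 \<inter> P2 = {} \<and> nc k P1 P2"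
      proof cases
        case 1 then show ?thesis using Q'P ncQ'P by simp
      next
        case 2 then show ?thesis using Q'P ncQ'P nc_sym by (simp add: Int_commute)
      next
        case 3 then show ?thesis using dis ncF ne by simp
      qed
    qed
    have "goodx n k l F' H'"
      unfolding goodx_def
    proof (intro conjI)
      show "finite F'" unfolding F'_def using fF by simp
      show "\<forall>P\<in>F'. parpartition n k l P" unfolding F'_def using pp ppQ' by blast
      show "\<forall>P1\<in>F'. \<forall>P2\<in>F'. P1 \<noteq> P2 \<longrightarrow> P1 \<inter> P2 = {}" using comb by blast
      show "\<forall>P1\<in>F'. \<forall>P2\<in>F'. P1 \<noteq> P2 \<longrightarrow> nc k P1 P2" using comb by blast
      show "H' \<subseteq> KS n k" by (rule H'K)
      show "finite H'" by (rule fH')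
      show "card H' \<le> l" using cH' cH by simp
      show "\<forall>A\<in>H'. \<forall>B\<in>H'. A \<noteq> B \<longrightarrow> A \<inter> B = {}" by (rule disH')
      show "\<forall>P\<in>F'. P \<inter> H' = {}"
      proof
        fix P assume "P \<in> F'"
        then consider "P = Q'" | "P \<in> F - {Q}" unfolding F'_def by blast
        then show "P \<inter> H' = {}"
        proof cases
          case 1
          have "Q \<inter> H = {}" using PH Q by blast
          then show ?thesis unfolding 1 Q'_def H'_def using rH Xr by blast
        next
          case 2
          then have "Q \<inter> P = {}" "P \<inter> H = {}" using dis PH Q by blast+
          then show ?thesis unfolding H'_def using Q(2) by blast
        qed
      qed
      show "\<forall>P\<in>F'. nc k H' P"
        unfolding F'_def using ncH'Q' ncH'P by blast
    qed
    then show ?thesis using cF' cH' by blast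
  qed
qed



lemma iter:
  assumes k3: "3 \<le> k" and l1: "1 \<le> l"
    and hM: "3 * (l * (k * ((n-1) choose (k-1)))) \<le> n choose k"
    and hE: "3 * (l + 3 * (l * (k * 4^k * l * n^(k-3)))) < n choose k"
  shows "t \<le> l * ((n choose k) div l) \<Longrightarrow> \<exists>F H. goodx n k l F H \<and> card H < l \<and> l * card F + card H = t"
proof (induction t)
  case 0
  have "goodx n k l {} {}" unfolding goodx_def by simp
  then show ?case using l1 by force
next
  case (Suc t)
  then obtain F H where g: "goodx n k l F H" and cH: "card H < l" and ct: "l * card F + card H = t"
    by auto
  have fF: "finite F" and pp: "\<forall>P\<in>F. parpartition n k l P" and fH: "finite H"
    using g unfolding goodx_def by auto
  have "t < n choose k"
  proof -
    have "l * ((n choose k) div l) \<le> n choose k" by simp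
    then show ?thesis using Suc.prems by linarith
  qed
  have "\<exists>r\<in>KS n k. (\<forall>P\<in>F. r \<notin> P) \<and> r \<notin> H"
  proof (rule ccontr)
    assume "\<not> ?thesis"
    then have sub: "KS n k \<subseteq> \<Union>F \<union> H" by blast
    have fin: "finite (\<Union>F)" using fF pp unfolding parpartition_def by auto
    have "card (KS n k) \<le> card (\<Union>F \<union> H)" by (rule card_mono[OF _ sub]) (use fin fH in simp)
    also have "\<dots> \<le> card (\<Union>F) + card H" by (rule card_Un_le)
    also have "card (\<Union>F) \<le> sum card F" by (rule card_Union_le_sum_card)
    also have "sum card F = card F * l"
      using sum_constant[of l F] sum.cong[of F F card "\<lambda>_. l"] pp unfolding parpartition_def by simp
    finally have "n choose k \<le> t" using ct KS_card by (simp add: mult.commute)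
    then show False using \<open>t < n choose k\<close> by simp
  qed
  then obtain r where rK: "r \<in> KS n k" and rF: "\<forall>P\<in>F. r \<notin> P" and rH: "r \<notin> H" by blast
  obtain F' H' where g': "goodx n k l F' H'" and cF': "card F' = card F" and cH': "card H' = card H + 1"
    using ext[OF g cH rK rF rH k3 hM hE] by blast
  show ?case
  proof (cases "card H' < l")
    case True
    then show ?thesis using g' cF' cH' ct by (intro exI[of _ F'] exI[of _ H']) simp
  next
    case False
    then have "card H' = l" using cH' cH by simp
    then have "goodx n k l (insert H' F') {} \<and> card (insert H' F') = card F' + 1"
      using close_step[OF g' _ l1] by simp
    then show ?thesis using cF' cH' ct \<open>card H' = l\<close> l1
      by (intro exI[of _ "insert H' F'"] exI[of _ "{}"]) (simp add: algebra_simps)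
  qed
qed

lemma close_conf:
  assumes "close k \<alpha> \<beta> P1 P2" and "real (k + 2) / real k \<le> \<alpha> + \<beta>" and "k > 0"
  shows "\<not> nc k P1 P2"
proof -
  obtain A1 B1 A2 B2 where m: "A1 \<in> P1" "B1 \<in> P1" "A2 \<in> P2" "B2 \<in> P2" "A1 \<noteq> B1" "A2 \<noteq> B2"
    and a: "real (card (A1 \<inter> A2)) > \<alpha> * real k" and b: "real (card (B1 \<inter> B2)) > \<beta> * real k"
    using assms(1) unfolding close_def by blast
  have "real (k + 2) / real k * real k \<le> (\<alpha> + \<beta>) * real k"
    using assms(2,3) by (intro mult_right_mono) auto
  then have "real (k + 2) \<le> (\<alpha> + \<beta>) * real k" using assms(3) by simp
  then have "real (k + 2) < real (card (A1 \<inter> A2)) + real (card (B1 \<inter> B2))"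
    using a b by (simp add: algebra_simps)
  then have "k + 3 \<le> card (A1 \<inter> A2) + card (B1 \<inter> B2)" by linarith
  then show ?thesis unfolding nc_def conf_def using m by blast
qed



lemma nk_bound:
  assumes "k \<le> n" "k > 0"
  shows "n^k \<le> (n choose k) * k^k"
proof -
  have "(real n / real k)^k \<le> real (n choose k)" by (rule binomial_ge_n_over_k_pow_k[OF assms(1)])
  then have "(real n / real k)^k * real k^k \<le> real (n choose k) * real k^k"
    by (intro mult_right_mono) auto
  moreover have "(real n / real k)^k * real k^k = real n ^ k"
    using assms(2) by (simp add: power_divide)
  ultimately have "real (n^k) \<le> real ((n choose k) * k^k)" by simp
  then show ?thesis by (simp only: of_nat_le_iff)
qed

lemma lin_aux:
  fixes x y a b :: nat
  assumes "x \<le> a" "y \<le> b"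
  shows "3 * (y + 3 * x) \<le> 3 * b + 9 * a"
proof -
  have "3 * (y + 3 * x) = 3 * y + 9 * x" by simp
  then show ?thesis using assms by linarith
qed

lemma bounds:
  assumes k3: "3 \<le> k" and nN: "3 * (1 + 3 * (k * 4^k)) * k^k + 1 \<le> n"
    and ln: "l \<le> n" and kl: "3 * (k * k * l) \<le> n"
  shows "3 * (l * (k * ((n-1) choose (k-1)))) \<le> n choose k"
    and "3 * (l + 3 * (l * (k * 4^k * l * n^(k-3)))) < n choose k"
proof -
  have n0: "n > 0" using nN by simp
  have "n * (3 * (l * (k * ((n-1) choose (k-1))))) = (3 * k * l) * (n * ((n-1) choose (k-1)))"
    by (simp only: ac_simps)
  also have "n * ((n-1) choose (k-1)) = k * (n choose k)"
    using times_binomial_minus1_eq[of k n] k3 by simp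
  also have "(3 * k * l) * (k * (n choose k)) = (3 * (k * k * l)) * (n choose k)"
    by (simp only: ac_simps)
  also have "\<dots> \<le> n * (n choose k)" using kl by (rule mult_le_mono1)
  finally show "3 * (l * (k * ((n-1) choose (k-1)))) \<le> n choose k" using n0 by simp
next
  have n0: "n > 0" using nN by simp
  define c where "c = k * 4^k"
  define P where "P = n^(k-1)"
  have P0: "P > 0" unfolding P_def using n0 by simp
  have km: "k - 1 = Suc (Suc (k-3))" using k3 by arith
  have nP: "n * n * n^(k-3) = P" unfolding P_def km by (simp add: mult.assoc)
  have "l * l * n^(k-3) \<le> n * n * n^(k-3)" using ln by (intro mult_le_mono1 mult_le_mono) auto
  then have "c * (l * l * n^(k-3)) \<le> c * P" using nP by simp
  moreover have "l * (c * l * n^(k-3)) = c * (l * l * n^(k-3))" by (simp only: ac_simps)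
  ultimately have t1: "l * (c * l * n^(k-3)) \<le> c * P" by (simp only:)
  have "n^1 \<le> n^(k-1)" by (rule power_increasing) (use k3 n0 in auto)
  then have "n \<le> P" unfolding P_def by simp
  then have t2: "l \<le> P" using ln by simp
  have lhs: "3 * (l + 3 * (l * (c * l * n^(k-3)))) \<le> 3 * (1 + 3 * c) * P"
  proof -
    have e: "3 * (1 + 3 * c) * P = 3 * P + 9 * (c * P)" by (simp add: algebra_simps)
    show ?thesis unfolding e by (rule lin_aux[OF t1 t2])
  qed
  have "k^k * (3 * (1 + 3 * c) * P) < (3 * (1 + 3 * c) * k^k + 1) * P"
    using P0 by (simp add: algebra_simps)
  also have "\<dots> \<le> n * P" using nN unfolding c_def by (intro mult_le_mono1) simp
  also have "n * P = n^k"
  proof -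
    have "k = Suc (k - 1)" using k3 by arith
    then have "n^k = n^(Suc (k-1))" by simp
    then show ?thesis unfolding P_def by simp
  qed
  also have "\<dots> \<le> (n choose k) * k^k"
  proof (rule nk_bound)
    have "(1::nat) \<le> 4^k" by simp
    then have "k \<le> k * 4^k" by simp
    also have "\<dots> \<le> 3 * (1 + 3 * (k * 4^k))" by simp
    also have "\<dots> \<le> 3 * (1 + 3 * (k * 4^k)) * k^k" using k3 by simp
    finally show "k \<le> n" using nN by simp
  qed (use k3 in simp)
  finally have "3 * (1 + 3 * c) * P < n choose k" by (simp add: mult.commute)
  then show "3 * (l + 3 * (l * (k * 4^k * l * n^(k-3)))) < n choose k" using lhs unfolding c_def by linarith
qed

theorem theorem1p2:
  fixes k :: nat and \<alpha> \<beta> :: real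
  assumes "k \<ge> 2" and "0 < \<alpha>" and "\<alpha> < 1" and "0 < \<beta>" and "\<beta> < 1"
    and "\<alpha> + \<beta> \<ge> real (k + 2) / real k"
  shows "\<exists>N. \<forall>n \<ge> N. \<forall>l::nat. l \<ge> 2 \<and> real (k^2 * l) \<le> real n / 3 \<longrightarrow>
           (\<exists>F :: nat set set set.
              finite F \<and> card F = (n choose k) div l \<and>
              (\<forall>P\<in>F. parpartition n k l P) \<and>
              (\<forall>P1\<in>F. \<forall>P2\<in>F. P1 \<noteq> P2 \<longrightarrow> P1 \<inter> P2 = {}) \<and>
              (\<forall>P1\<in>F. \<forall>P2\<in>F. P1 \<noteq> P2 \<longrightarrow> \<not> close k \<alpha> \<beta> P1 P2))"
proof -
  have k3: "3 \<le> k"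
  proof (rule ccontr)
    assume "\<not> 3 \<le> k"
    then have "k = 2" using assms(1) by simp
    then show False using assms(3,5,6) by simp
  qed
  define N where "N = 3 * (1 + 3 * (k * 4^k)) * k^k + 1"
  show ?thesis
  proof (intro exI[of _ N] allI impI)
    fix n l :: nat assume nN: "N \<le> n" and hl: "2 \<le> l \<and> real (k^2 * l) \<le> real n / 3"
    have l1: "1 \<le> l" using hl by simp
    have "real (3 * (k * k * l)) \<le> real n" using hl by (simp add: power2_eq_square)
    then have kl: "3 * (k * k * l) \<le> n" by (simp only: of_nat_le_iff)
    have "1 \<le> k * k" using k3 by (simp add: Suc_le_eq)
    then have "1 * l \<le> k * k * l" by (rule mult_le_mono1)
    then have ln: "l \<le> n" using kl by linarith
    have nN': "3 * (1 + 3 * (k * 4^k)) * k^k + 1 \<le> n" using nN unfolding N_def .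
    note b = bounds[OF k3 nN' ln kl]
    define q where "q = (n choose k) div l"
    obtain F H where g: "goodx n k l F H" and cH: "card H < l" and ct: "l * card F + card H = l * q"
      using iter[OF k3 l1 b(1) b(2), of "l * q"] unfolding q_def by auto
    have "(l * card F + card H) mod l = card H" using cH by simp
    then have "card H = 0" using ct by simp
    then have "card F = q" using ct l1 by simp
    have fF: "finite F" and pp: "\<forall>P\<in>F. parpartition n k l P"
      and dis: "\<forall>P1\<in>F. \<forall>P2\<in>F. P1 \<noteq> P2 \<longrightarrow> P1 \<inter> P2 = {}"
      and ncF: "\<forall>P1\<in>F. \<forall>P2\<in>F. P1 \<noteq> P2 \<longrightarrow> nc k P1 P2"
      using g unfolding goodx_def by auto
    have "\<forall>P1\<in>F. \<forall>P2\<in>F. P1 \<noteq> P2 \<longrightarrow> \<not> close k \<alpha> \<beta> P1 P2"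
      using ncF close_conf[OF _ assms(6)] k3 by fastforce
    then show "\<exists>F :: nat set set set.
              finite F \<and> card F = (n choose k) div l \<and>
              (\<forall>P\<in>F. parpartition n k l P) \<and>
              (\<forall>P1\<in>F. \<forall>P2\<in>F. P1 \<noteq> P2 \<longrightarrow> P1 \<inter> P2 = {}) \<and>
              (\<forall>P1\<in>F. \<forall>P2\<in>F. P1 \<noteq> P2 \<longrightarrow> \<not> close k \<alpha> \<beta> P1 P2)"
      using fF \<open>card F = q\<close> pp dis unfolding q_def by blast
  qed
qed


end
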